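(* Let $n\ge 2$ and $1\le k\le n-1$ be integers, $T>0$, and $t\in\{1,\dots,n\}$. Let $X_1,\dots,X_n$ be independent random variables each uniformly distributed on $[0,T]$, and let $$Y_{t,2}=\min\Big(X_t,\ \max\big(\mathrm{mink}(\{X_i\}_{i\neq t})\big)\Big),$$ where $\max(\mathrm{mink}(\{X_i\}_{i\neq t}))$ denotes the $k$-th smallest of the $n-1$ values $X_i$, $i\ne t$. Then $$E[Y_{t,2}]=\frac{T}{2}-\frac{(n-k)(n-k+1)T}{2n(n+1)}.$$
   Context: In an $(n,k,m)$ systematic MDS array code stored on $n$ nodes (any $k$ nodes recover all data), $X_i$ is the access latency of node $i$; $Y_{t,2}$ is the data access latency of the proposed accelerated access algorithms (AAKL/AAUL) for the data of node $t$: the minimum of directly reading node $t$ and reading the fastest $k$ nodes other than $t$ and decoding. *)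

theory Defs
  imports "HOL-Probability.Probability"
begin

definition kth_smallest_except :: "nat \<Rightarrow> nat \<Rightarrow> nat \<Rightarrow> (nat \<Rightarrow> real) \<Rightarrow> real" where
  "kth_smallest_except n k t x = sort (map x (filter (\<lambda>i. i \<noteq> t) [1..<Suc n])) ! (k - 1)"

definition Y2 :: "nat \<Rightarrow> nat \<Rightarrow> nat \<Rightarrow> (nat \<Rightarrow> real) \<Rightarrow> real" where
  "Y2 n k t x = min (x t) (kth_smallest_except n k t x)"

end

theory Submission
  imports Defs
begin


lemma sorted_nth_gt_iff:
  fixes ys :: "real list" assumes "sorted ys" "1 \<le> k" "k \<le> length ys"
  shows "s < ys ! (k-1) \<longleftrightarrow> length (filter (\<lambda>y. y \<le> s) ys) < k"
proof
  assume a: "s < ys ! (k-1)"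
  have "{i. i < length ys \<and> ys ! i \<le> s} \<subseteq> {..<k-1}"
  proof
    fix i assume "i \<in> {i. i < length ys \<and> ys ! i \<le> s}"
    hence i: "i < length ys" "ys ! i \<le> s" by auto
    show "i \<in> {..<k-1}"
    proof (rule ccontr)
      assume "i \<notin> {..<k-1}"
      hence "ys ! (k-1) \<le> ys ! i" using assms i by (intro sorted_nth_mono) auto
      thus False using a i by simp
    qed
  qed
  hence "card {i. i < length ys \<and> ys ! i \<le> s} \<le> k - 1"
    by (metis card_lessThan card_mono finite_lessThan)
  thus "length (filter (\<lambda>y. y \<le> s) ys) < k" using assms
    by (simp add: length_filter_conv_card)
next
  assume a: "length (filter (\<lambda>y. y \<le> s) ys) < k"
  show "s < ys ! (k-1)"
  proof (rule ccontr)
    assume "\<not> s < ys ! (k-1)"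
    hence b: "ys ! (k-1) \<le> s" by simp
    have sub: "{..<k} \<subseteq> {i. i < length ys \<and> ys ! i \<le> s}"
    proof
      fix i assume "i \<in> {..<k}"
      hence "i < length ys" "ys ! i \<le> ys ! (k-1)" using assms by (auto intro: sorted_nth_mono)
      thus "i \<in> {i. i < length ys \<and> ys ! i \<le> s}" using b by auto
    qed
    have "k \<le> card {i. i < length ys \<and> ys ! i \<le> s}"
      using card_mono[OF _ sub] by simp
    thus False using a by (simp add: length_filter_conv_card)
  qed
qed

lemma kth_gt_iff:
  assumes "1 \<le> k" "k \<le> n-1" "t \<in> {1..n}"
  shows "s < kth_smallest_except n k t x \<longleftrightarrow> card {i\<in>{1..n}-{t}. x i \<le> s} < k"
proof -
  define L where "L = filter (\<lambda>i. i\<noteq>t) [1..<Suc n]"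
  have dL: "distinct L" and sL: "set L = {1..n}-{t}" unfolding L_def by auto
  have lL: "length L = n - 1" using distinct_card[OF dL] sL assms(3) by simp
  have "s < kth_smallest_except n k t x \<longleftrightarrow> length (filter (\<lambda>y. y \<le> s) (sort (map x L))) < k"
    unfolding kth_smallest_except_def L_def[symmetric]
    by (rule sorted_nth_gt_iff) (use assms lL in auto)
  also have "length (filter (\<lambda>y. y \<le> s) (sort (map x L))) = card {i\<in>{1..n}-{t}. x i \<le> s}"
  proof -
    have e: "{i. x i \<le> s} \<inter> set L = {i\<in>{1..n}-{t}. x i \<le> s}" unfolding sL by blast
    have "length (filter (\<lambda>y. y \<le> s) (sort (map x L))) = length (filter (\<lambda>i. x i \<le> s) L)"
      by (simp add: filter_sort filter_map comp_def)
    also have "\<dots> = card ({i. x i \<le> s} \<inter> set L)" by (rule distinct_length_filter[OF dL])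
    finally show ?thesis unfolding e .
  qed
  finally show ?thesis .
qed


lemma beta_nat:
  "((\<lambda>u::real. u^a * (1-u)^b) has_integral (fact a * fact b / fact (a+b+1))) {0..1}"
proof -
  have h: "((\<lambda>t::real. t powr (real (a+1) - 1) * (1 - t) powr (real (b+1) - 1)) has_integral
        Beta (real (a+1)) (real (b+1))) {0..1}"
    by (rule has_integral_Beta_real) auto
  have "Beta (real (a+1)) (real (b+1)) = fact a * fact b / fact (a+b+1)"
  proof -
    have g: "Gamma (real (Suc m)) = fact m" for m
      using Gamma_fact[of m] by (simp add: add.commute)
    show ?thesis unfolding Beta_def
      using g[of a] g[of b] g[of "a+b+1"] by (simp add: add.commute add.left_commute)
  qed
  with h have h2: "((\<lambda>t::real. t powr (real a) * (1 - t) powr (real b)) has_integral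
        (fact a * fact b / fact (a+b+1))) {0..1}" by simp
  have e: "x powr real a * (1 - x) powr real b = x ^ a * (1 - x) ^ b" if "x \<in> {0..1} - {0,1}" for x :: real
  proof -
    from that have "0 < x" "0 < 1 - x" by auto
    thus ?thesis by (simp add: powr_realpow)
  qed
  show ?thesis
    by (rule has_integral_spike_finite[OF _ _ h2, of "{0,1}"]) (use e in auto)
qed

lemma coef_eq:
  assumes "j < n"
  shows "real ((n-1) choose j) * (fact j * fact (n-j) / fact (n+1)) = real (n-j) / (real n * real (n+1))"
proof -
  obtain m where n: "n = Suc m" using assms by (cases n) auto
  have jm: "j \<le> m" using assms n by simp
  have b: "real (m choose j) = fact m / (fact j * fact (m-j))" using binomial_fact[OF jm] by simp
  have f1: "fact (n - j) = real (n-j) * fact (m-j)" 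
    using jm by (simp add: n Suc_diff_le)
  have f2: "(fact (n+1) :: real) = real (n+1) * real n * fact m" by (simp add: n)
  have nm: "n - 1 = m" using n by simp
  have "fact m \<noteq> (0::real)" "real n > 0" using n by simp_all
  then show ?thesis unfolding nm b f1 f2 by (simp add: divide_simps)
qed

lemma sum_n_minus:
  assumes "k \<le> n"
  shows "(\<Sum>j<k. real (n-j)) = (real n * real (n+1) - real (n-k) * real (n-k+1)) / 2"
  using assms
proof (induction k)
  case 0 then show ?case by simp
next
  case (Suc k)
  hence "k \<le> n" by simp
  from Suc.IH[OF this] have "(\<Sum>j<Suc k. real (n-j)) = (real n * real (n+1) - real (n-k) * real (n-k+1)) / 2 + real (n-k)" by simp
  also have "\<dots> = (real n * real (n+1) - real (n - Suc k) * real (n - Suc k+1)) / 2"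
    using Suc.prems by (simp add: of_nat_diff field_simps)
  finally show ?case .
qed

lemma poly_integral:
  assumes "k \<le> n"
  shows "((\<lambda>u::real. \<Sum>j<k. real ((n-1) choose j) * (u^j * (1-u)^(n-j))) has_integral
          (\<Sum>j<k. real (n-j) / (real n * real (n+1)))) {0..1}"
proof (rule has_integral_sum)
  fix j assume "j \<in> {..<k}"
  hence j: "j < n" using assms by simp
  have "((\<lambda>u::real. u^j * (1-u)^(n-j)) has_integral (fact j * fact (n-j) / fact (j+(n-j)+1))) {0..1}"
    by (rule beta_nat)
  moreover have "j + (n-j) + 1 = n + 1" using j by simp
  ultimately have "((\<lambda>u::real. u^j * (1-u)^(n-j)) has_integral (fact j * fact (n-j) / fact (n+1))) {0..1}"
    by simp
  from has_integral_mult_right[OF this, of "real ((n-1) choose j)"]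
  show "((\<lambda>u::real. real ((n-1) choose j) * (u^j * (1-u)^(n-j))) has_integral
          (real (n-j) / (real n * real (n+1)))) {0..1}"
    using coef_eq[OF j] by simp
qed simp



lemma card_as_sum:
  fixes x :: "nat \<Rightarrow> real"
  assumes "finite A"
  shows "real (card {i\<in>A. x i \<le> a}) = (\<Sum>i\<in>A. indicator {..a} (x i))"
proof -
  have "(\<Sum>i\<in>A. indicator {..a} (x i) :: real) = (\<Sum>i\<in>A. of_bool (x i \<le> a))"
    by (simp add: indicator_def)
  also have "\<dots> = of_nat (card (A \<inter> {i. x i \<le> a}))" using sum_of_bool_eq[OF assms assms] .
  finally show ?thesis by (simp add: Collect_conj_eq Int_commute)
qed

lemma kth_meas:
  assumes "1 \<le> k" "k \<le> n-1" "t \<in> {1..n}"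
  shows "kth_smallest_except n k t \<in> borel_measurable (PiM {1..n} (\<lambda>_. borel))"
proof (subst borel_measurable_iff_greater, intro allI)
  fix a :: real
  have "{w \<in> space (PiM {1..n} (\<lambda>_. borel)). a < kth_smallest_except n k t w} =
        {w \<in> space (PiM {1..n} (\<lambda>_. borel)). (\<Sum>i\<in>{1..n}-{t}. indicator {..a} (w i) :: real) < real k}"
  proof -
    have "a < kth_smallest_except n k t w \<longleftrightarrow> (\<Sum>i\<in>{1..n}-{t}. indicator {..a} (w i) :: real) < real k" for w
    proof -
      have c: "real (card {i\<in>{1..n}-{t}. w i \<le> a}) = (\<Sum>i\<in>{1..n}-{t}. indicator {..a} (w i))"
        by (rule card_as_sum) simp
      show ?thesis unfolding kth_gt_iff[OF assms] c[symmetric] by (rule of_nat_less_iff[symmetric])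
    qed
    then show ?thesis by simp
  qed
  also have "\<dots> \<in> sets (PiM {1..n} (\<lambda>_. borel))"
    by measurable
  finally show "{w \<in> space (PiM {1..n} (\<lambda>_. borel)). a < kth_smallest_except n k t w} \<in> sets (PiM {1..n} (\<lambda>_. borel))" .
qed

lemma Y2_meas:
  assumes "1 \<le> k" "k \<le> n-1" "t \<in> {1..n}"
  shows "Y2 n k t \<in> borel_measurable (PiM {1..n} (\<lambda>_. borel))"
proof -
  note km[measurable] = kth_meas[OF assms]
  have "(\<lambda>x. min (x t) (kth_smallest_except n k t x)) \<in> borel_measurable (PiM {1..n} (\<lambda>_. borel))"
    using assms(3) by measurable
  thus ?thesis unfolding Y2_def[abs_def] .
qed



lemma U_prob: "T > 0 \<Longrightarrow> prob_space (uniform_measure lborel {0..T::real})"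
  by (rule prob_space_uniform_measure) auto

lemma U_sets[simp]: "sets (uniform_measure lborel {0..T::real}) = sets borel"
  by simp

lemma U_le:
  assumes "0 \<le> s" "s \<le> T" "T > 0"
  shows "emeasure (uniform_measure lborel {0..T::real}) {..s} = ennreal (s/T)"
proof -
  have "{0..T} \<inter> {..s} = {0..s}" using assms by auto
  then show ?thesis using assms by (simp add: emeasure_uniform_measure divide_ennreal)
qed

lemma U_gt:
  assumes "0 \<le> s" "s \<le> T" "T > 0"
  shows "emeasure (uniform_measure lborel {0..T::real}) {s<..} = ennreal (1 - s/T)"
proof -
  have "{0..T} \<inter> {s<..} = {s<..T}" using assms by auto
  then have "emeasure (uniform_measure lborel {0..T::real}) {s<..} = ennreal (T - s) / ennreal T"
    using assms by (simp add: emeasure_uniform_measure)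
  also have "\<dots> = ennreal ((T-s)/T)" using assms by (simp add: divide_ennreal)
  also have "(T-s)/T = 1 - s/T" using assms by (simp add: field_simps)
  finally show ?thesis .
qed

lemma U_gt2:
  assumes "T \<le> s" "T > 0"
  shows "emeasure (uniform_measure lborel {0..T::real}) {s<..} = 0"
proof -
  have "{0..T} \<inter> {s<..} = {}" using assms by auto
  then show ?thesis using assms by (simp add: emeasure_uniform_measure)
qed

lemma prod_of_bool:
  assumes "finite I"
  shows "(\<Prod>i\<in>I. of_bool (P i) :: real) = of_bool (\<forall>i\<in>I. P i)"
proof (cases "\<forall>i\<in>I. P i")
  case True then show ?thesis by simp
next
  case False
  then obtain i where "i \<in> I" "\<not> P i" by auto
  then show ?thesis using assms by (auto intro: prod_zero)
qed

lemma indicator_decomp: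
  fixes x :: "nat \<Rightarrow> real"
  assumes "finite I'" "t \<notin> I'"
  shows "(of_bool (s < x t \<and> card {i\<in>I'. x i \<le> s} < k) :: real) =
    (\<Sum>J\<in>{J. J \<subseteq> I' \<and> card J < k}. \<Prod>i\<in>insert t I'. indicator (if i \<in> J then {..s} else {s<..}) (x i))"
proof -
  define S where "S = {i\<in>I'. x i \<le> s}"
  have p: "(\<Prod>i\<in>insert t I'. indicator (if i \<in> J then {..s} else {s<..}) (x i) :: real)
        = (if J = S then of_bool (s < x t) else 0)" if J: "J \<subseteq> I'" for J
  proof -
    have tJ: "t \<notin> J" using J assms by auto
    have "(\<Prod>i\<in>insert t I'. indicator (if i \<in> J then {..s} else {s<..}) (x i) :: real)
        = indicator {s<..} (x t) * (\<Prod>i\<in>I'. indicator (if i \<in> J then {..s} else {s<..}) (x i))"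
      using assms tJ by simp
    also have "(\<Prod>i\<in>I'. indicator (if i \<in> J then {..s} else {s<..}) (x i) :: real)
        = (\<Prod>i\<in>I'. of_bool (x i \<in> (if i \<in> J then {..s} else {s<..})))"
      by (simp add: indicator_def)
    also have "\<dots> = of_bool (\<forall>i\<in>I'. x i \<in> (if i \<in> J then {..s} else {s<..}))"
      by (rule prod_of_bool[OF assms(1)])
    also have "(\<forall>i\<in>I'. x i \<in> (if i \<in> J then {..s} else {s<..})) \<longleftrightarrow> J = S"
      using J unfolding S_def by (auto simp: not_le)
    finally show ?thesis by (simp add: indicator_def)
  qed
  have "(\<Sum>J\<in>{J. J \<subseteq> I' \<and> card J < k}. \<Prod>i\<in>insert t I'. indicator (if i \<in> J then {..s} else {s<..}) (x i) :: real)
      = (\<Sum>J\<in>{J. J \<subseteq> I' \<and> card J < k}. if J = S then of_bool (s < x t) else 0)"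
    by (rule sum.cong) (auto simp: p)
  also have "\<dots> = (if S \<in> {J. J \<subseteq> I' \<and> card J < k} then of_bool (s < x t) else 0)"
    by (rule sum.delta) (use assms in simp)
  also have "\<dots> = of_bool (s < x t \<and> card S < k)"
    unfolding S_def by auto
  finally show ?thesis unfolding S_def by simp
qed

lemma group_card:
  fixes f :: "nat \<Rightarrow> real"
  assumes "finite A"
  shows "(\<Sum>J\<in>{J. J \<subseteq> A \<and> card J < k}. f (card J)) = (\<Sum>j<k. real (card A choose j) * f j)"
proof -
  have fin: "finite {J. J \<subseteq> A \<and> card J < k}" using assms by simp
  have "(\<Sum>J\<in>{J. J \<subseteq> A \<and> card J < k}. f (card J))
      = (\<Sum>j<k. \<Sum>J\<in>{J \<in> {J. J \<subseteq> A \<and> card J < k}. card J = j}. f (card J))"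
    by (rule sum.group[symmetric]) (use fin in auto)
  also have "\<dots> = (\<Sum>j<k. real (card A choose j) * f j)"
  proof (rule sum.cong)
    fix j assume "j \<in> {..<k}"
    hence e: "{J \<in> {J. J \<subseteq> A \<and> card J < k}. card J = j} = {J. J \<subseteq> A \<and> card J = j}" by auto
    show "(\<Sum>J\<in>{J \<in> {J. J \<subseteq> A \<and> card J < k}. card J = j}. f (card J)) = real (card A choose j) * f j"
      unfolding e using n_subsets[OF assms, of j] by simp
  qed simp
  finally show ?thesis .
qed



lemma inner:
  fixes T s :: real
  assumes T: "T > 0" and k: "1 \<le> k" "k \<le> n-1" and t: "t \<in> {1..n}" and s: "0 \<le> s"
  shows "(\<integral>\<^sup>+x. ennreal (of_bool (s < x t \<and> card {i\<in>{1..n}-{t}. x i \<le> s} < k))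
            \<partial>PiM {1..n} (\<lambda>_. uniform_measure lborel {0..T}))
       = (if s \<le> T then ennreal (\<Sum>j<k. real ((n-1) choose j) * ((s/T)^j * (1-s/T)^(n-j))) else 0)"
proof -
  define U where "U = uniform_measure lborel {0..T}"
  define I' where "I' = {1..n} - {t}"
  define Js :: "nat set set" where "Js = {J. J \<subseteq> I' \<and> card J < k}"
  define A :: "nat set \<Rightarrow> nat \<Rightarrow> real set" where "A = (\<lambda>J i. if i \<in> J then {..s} else {s<..})"
  have I: "insert t I' = {1..n}" using t unfolding I'_def by auto
  have fI': "finite I'" and tI': "t \<notin> I'" unfolding I'_def by auto
  have cI': "card I' = n - 1" unfolding I'_def using t by simp
  have finJs: "finite Js" unfolding Js_def using fI' by simp
  interpret PP: product_prob_space "\<lambda>_. U"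
    unfolding U_def using U_prob[OF T]
    by (simp add: product_prob_space_def product_sigma_finite_def product_prob_space_axioms_def
        prob_space_imp_sigma_finite)
  have sA[measurable]: "A J i \<in> sets borel" for J i unfolding A_def by auto
  have pw: "ennreal (of_bool (s < x t \<and> card {i\<in>{1..n}-{t}. x i \<le> s} < k))
      = (\<Sum>J\<in>Js. \<Prod>i\<in>{1..n}. indicator (A J i) (x i))" for x :: "nat \<Rightarrow> real"
  proof -
    have "ennreal (of_bool (s < x t \<and> card {i\<in>{1..n}-{t}. x i \<le> s} < k))
        = ennreal (\<Sum>J\<in>Js. \<Prod>i\<in>{1..n}. indicator (A J i) (x i))"
    proof -
      have d: "(of_bool (s < x t \<and> card {i\<in>I'. x i \<le> s} < k) :: real)
          = (\<Sum>J\<in>Js. \<Prod>i\<in>{1..n}. indicator (A J i) (x i))"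
        using indicator_decomp[OF fI' tI', of s x k] unfolding I Js_def A_def by simp
      show ?thesis using d unfolding I'_def by simp
    qed
    also have "\<dots> = (\<Sum>J\<in>Js. ennreal (\<Prod>i\<in>{1..n}. indicator (A J i) (x i)))"
      by (rule sum_ennreal[symmetric]) (auto intro: prod_nonneg)
    also have "\<dots> = (\<Sum>J\<in>Js. \<Prod>i\<in>{1..n}. indicator (A J i) (x i))"
      by (rule sum.cong[OF refl], subst prod_ennreal[symmetric]) (auto simp: ennreal_indicator)
    finally show ?thesis .
  qed
  have "(\<integral>\<^sup>+x. ennreal (of_bool (s < x t \<and> card {i\<in>{1..n}-{t}. x i \<le> s} < k)) \<partial>PiM {1..n} (\<lambda>_. U))
      = (\<integral>\<^sup>+x. (\<Sum>J\<in>Js. \<Prod>i\<in>{1..n}. indicator (A J i) (x i)) \<partial>PiM {1..n} (\<lambda>_. U))"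
    by (simp only: pw)
  also have "\<dots> = (\<Sum>J\<in>Js. \<integral>\<^sup>+x. (\<Prod>i\<in>{1..n}. indicator (A J i) (x i)) \<partial>PiM {1..n} (\<lambda>_. U))"
  proof (rule nn_integral_sum)
    fix J
    show "(\<lambda>x. \<Prod>i\<in>{1..n}. indicator (A J i) (x i) :: ennreal) \<in> borel_measurable (PiM {1..n} (\<lambda>_. U))"
      unfolding U_def by measurable
  qed
  also have "\<dots> = (\<Sum>J\<in>Js. \<Prod>i\<in>{1..n}. emeasure U (A J i))"
  proof (rule sum.cong[OF refl])
    fix J
    have "(\<integral>\<^sup>+x. (\<Prod>i\<in>{1..n}. indicator (A J i) (x i)) \<partial>PiM {1..n} (\<lambda>_. U))
        = (\<Prod>i\<in>{1..n}. \<integral>\<^sup>+y. indicator (A J i) y \<partial>U)"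
      by (rule PP.product_nn_integral_prod) (auto simp: U_def)
    also have "\<dots> = (\<Prod>i\<in>{1..n}. emeasure U (A J i))"
      by (rule prod.cong[OF refl], rule nn_integral_indicator) (simp add: U_def)
    finally show "(\<integral>\<^sup>+x. (\<Prod>i\<in>{1..n}. indicator (A J i) (x i)) \<partial>PiM {1..n} (\<lambda>_. U))
        = (\<Prod>i\<in>{1..n}. emeasure U (A J i))" .
  qed
  also have "\<dots> = (if s \<le> T then ennreal (\<Sum>j<k. real ((n-1) choose j) * ((s/T)^j * (1-s/T)^(n-j))) else 0)"
  proof (cases "s \<le> T")
    case True
    define q where "q = s / T"
    have q: "0 \<le> q" "q \<le> 1" using True s T unfolding q_def by auto
    have Ule: "emeasure U {..s} = ennreal q" unfolding U_def q_def using U_le[OF s True T] .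
    have Ugt: "emeasure U {s<..} = ennreal (1-q)" unfolding U_def q_def using U_gt[OF s True T] .
    have "(\<Prod>i\<in>{1..n}. emeasure U (A J i)) = ennreal (q ^ card J * (1-q)^(n - card J))" if J: "J \<in> Js" for J
    proof -
      have JI: "J \<subseteq> {1..n}" using J unfolding Js_def I'_def by auto
      have "(\<Prod>i\<in>{1..n}. emeasure U (A J i)) = (\<Prod>i\<in>{1..n}. ennreal (if i \<in> J then q else 1 - q))"
        by (rule prod.cong[OF refl]) (simp add: A_def Ule Ugt)
      also have "\<dots> = ennreal (\<Prod>i\<in>{1..n}. (if i \<in> J then q else 1 - q))"
        by (rule prod_ennreal) (use q in auto)
      also have "(\<Prod>i\<in>{1..n}. (if i \<in> J then q else 1 - q)) = q ^ card J * (1-q)^(n - card J)"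
      proof -
        have "(\<Prod>i\<in>{1..n}. (if i \<in> J then q else 1 - q)) = q ^ card ({1..n} \<inter> {i. i \<in> J}) * (1-q) ^ card ({1..n} \<inter> - {i. i \<in> J})"
          by (simp add: prod.If_cases)
        moreover have "{1..n} \<inter> {i. i \<in> J} = J" using JI by auto
        moreover have "{1..n} \<inter> - {i. i \<in> J} = {1..n} - J" by auto
        moreover have "card ({1..n} - J) = n - card J" using JI by (simp add: card_Diff_subset finite_subset)
        ultimately show ?thesis by simp
      qed
      finally show ?thesis .
    qed
    hence "(\<Sum>J\<in>Js. \<Prod>i\<in>{1..n}. emeasure U (A J i)) = (\<Sum>J\<in>Js. ennreal (q ^ card J * (1-q)^(n - card J)))"
      by (rule sum.cong[OF refl])
    also have "\<dots> = ennreal (\<Sum>J\<in>Js. q ^ card J * (1-q)^(n - card J))"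
      by (rule sum_ennreal) (use q in auto)
    also have "(\<Sum>J\<in>Js. q ^ card J * (1-q)^(n - card J)) = (\<Sum>j<k. real ((n-1) choose j) * (q^j * (1-q)^(n-j)))"
      unfolding Js_def using group_card[OF fI', of "\<lambda>j. q^j * (1-q)^(n-j)" k] cI' by simp
    finally show ?thesis using True unfolding q_def by simp
  next
    case False
    have z: "(\<Prod>i\<in>{1..n}. emeasure U (A J i)) = 0" if J: "J \<in> Js" for J
    proof (rule prod_zero)
      have "t \<notin> J" using J tI' unfolding Js_def by auto
      hence "A J t = {s<..}" unfolding A_def by simp
      hence "emeasure U (A J t) = 0" unfolding U_def using U_gt2[of T s] False T by simp
      thus "\<exists>i\<in>{1..n}. emeasure U (A J i) = 0" using t by auto
    qed simp
    have "(\<Sum>J\<in>Js. \<Prod>i\<in>{1..n}. emeasure U (A J i)) = 0"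
      by (rule sum.neutral) (use z in blast)
    then show ?thesis using False by simp
  qed
  finally show ?thesis unfolding U_def .
qed



lemma Y2_restrict:
  assumes "t \<in> {1..n}"
  shows "Y2 n k t (restrict x {1..n}) = Y2 n k t x"
proof -
  have "map (restrict x {1..n}) (filter (\<lambda>i. i \<noteq> t) [1..<Suc n]) = map x (filter (\<lambda>i. i \<noteq> t) [1..<Suc n])"
    by (rule map_cong) auto
  moreover have "restrict x {1..n} t = x t" using assms by simp
  ultimately show ?thesis by (simp only: Y2_def kth_smallest_except_def)
qed

lemma Y2_nonneg:
  assumes "1 \<le> k" "k \<le> n-1" "t \<in> {1..n}" "\<And>i. i \<in> {1..n} \<Longrightarrow> 0 \<le> x i"
  shows "0 \<le> Y2 n k t x"
proof -
  have "0 \<le> kth_smallest_except n k t x"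
  proof (rule ccontr)
    assume a: "\<not> 0 \<le> kth_smallest_except n k t x"
    have e: "{i\<in>{1..n}-{t}. x i \<le> kth_smallest_except n k t x} = {}" using a assms(4) by force
    have c: "card {i\<in>{1..n}-{t}. x i \<le> kth_smallest_except n k t x} < k" unfolding e using assms(1) by simp
    have "kth_smallest_except n k t x < kth_smallest_except n k t x"
      using kth_gt_iff[OF assms(1-3), of "kth_smallest_except n k t x" x] c by blast
    thus False by simp
  qed
  thus ?thesis using assms(3,4) unfolding Y2_def by simp
qed

lemma Y2_gt_iff:
  assumes "1 \<le> k" "k \<le> n-1" "t \<in> {1..n}"
  shows "s < Y2 n k t x \<longleftrightarrow> s < x t \<and> card {i\<in>{1..n}-{t}. x i \<le> s} < k"
  unfolding Y2_def using kth_gt_iff[OF assms] by simp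

lemma final_arith:
  fixes a b T :: real
  assumes "a > 0"
  shows "T * (((a*(a+1) - b*(b+1)) / 2) / (a*(a+1))) = T / 2 - (b*(b+1)*T) / (2*a*(a+1))"
proof -
  have "a*(a+1) > 0" using assms by simp
  then show ?thesis by (simp add: field_simps)
qed

theorem corollary4:
  fixes M :: "'a measure" and X :: "nat \<Rightarrow> 'a \<Rightarrow> real"
    and n k t :: nat and T :: real
  assumes "prob_space M"
    and "n \<ge> 2" and "1 \<le> k" and "k \<le> n - 1" and "T > 0" and "t \<in> {1..n}"
    and "prob_space.indep_vars M (\<lambda>_. borel) X {1..n}"
    and "\<And>i. i \<in> {1..n} \<Longrightarrow> distr M borel (X i) = uniform_measure lborel {0..T}"
  shows "(\<integral>\<omega>. Y2 n k t (\<lambda>i. X i \<omega>) \<partial>M)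
           = T / 2 - (real (n - k) * real (n - k + 1) * T) / (2 * real n * real (n + 1))"
proof -
  note PSM = assms(1)
  note indep = assms(7)
  note kk = assms(3) assms(4) assms(6)
  define U where "U = uniform_measure lborel {0..T}"
  define P where "P = PiM {1..n} (\<lambda>_. U)"
  define F where "F = (\<lambda>u::real. \<Sum>j<k. real ((n-1) choose j) * (u^j * (1-u)^(n-j)))"
  define V where "V = (\<Sum>j<k. real (n-j) / (real n * real (n+1)))"
  have Xm: "X i \<in> borel_measurable M" if "i \<in> {1..n}" for i
    using indep that unfolding prob_space.indep_vars_def[OF PSM] by auto
  have Xv: "(\<lambda>\<omega>. \<lambda>i\<in>{1..n}. X i \<omega>) \<in> M \<rightarrow>\<^sub>M PiM {1..n} (\<lambda>_. borel)"
    by (rule measurable_restrict) (use Xm in auto)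
  have D: "distr M (PiM {1..n} (\<lambda>_. borel)) (\<lambda>\<omega>. \<lambda>i\<in>{1..n}. X i \<omega>) = P"
  proof -
    have "distr M (PiM {1..n} (\<lambda>_. borel)) (\<lambda>\<omega>. \<lambda>i\<in>{1..n}. X i \<omega>) = PiM {1..n} (\<lambda>i. distr M borel (X i))"
      using prob_space.indep_vars_iff_distr_eq_PiM'[OF PSM, of "{1..n}" X "\<lambda>_. borel"] indep Xm assms(2)
      by auto
    also have "\<dots> = P" unfolding P_def U_def by (rule PiM_cong) (auto simp: assms(8))
    finally show ?thesis .
  qed
  have setsP: "sets P = sets (PiM {1..n} (\<lambda>_. borel))"
    unfolding P_def U_def by (rule sets_PiM_cong) auto
  have Y2P[measurable]: "Y2 n k t \<in> borel_measurable P"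
    using Y2_meas[OF kk] by (simp add: measurable_cong_sets[OF setsP refl])
  have YM: "(\<lambda>\<omega>. Y2 n k t (\<lambda>i. X i \<omega>)) \<in> borel_measurable M"
  proof -
    have "(\<lambda>\<omega>. Y2 n k t (\<lambda>i\<in>{1..n}. X i \<omega>)) \<in> borel_measurable M"
      using measurable_comp[OF Xv Y2_meas[OF kk]] by (simp add: comp_def)
    thus ?thesis using Y2_restrict[OF assms(6)] by simp
  qed
  have AEX: "AE \<omega> in M. X i \<omega> \<in> {0..T}" if "i \<in> {1..n}" for i
  proof (rule AE_distrD[OF Xm[OF that]])
    show "AE y in distr M borel (X i). y \<in> {0..T}"
      unfolding assms(8)[OF that] using assms(5) by (subst AE_uniform_measure) auto
  qed
  have AEnn: "AE \<omega> in M. 0 \<le> Y2 n k t (\<lambda>i. X i \<omega>)"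
  proof -
    have "AE \<omega> in M. \<forall>i\<in>{1..n}. X i \<omega> \<in> {0..T}" by (rule AE_finite_allI) (use AEX in auto)
    thus ?thesis by eventually_elim (rule Y2_nonneg[OF kk], auto)
  qed
  have step1: "(\<integral>\<omega>. Y2 n k t (\<lambda>i. X i \<omega>) \<partial>M) = enn2real (\<integral>\<^sup>+x. ennreal (Y2 n k t x) \<partial>P)"
  proof -
    have "(\<integral>\<omega>. Y2 n k t (\<lambda>i. X i \<omega>) \<partial>M) = enn2real (\<integral>\<^sup>+\<omega>. ennreal (Y2 n k t (\<lambda>i. X i \<omega>)) \<partial>M)"
      by (rule integral_eq_nn_integral[OF YM AEnn])
    also have "(\<integral>\<^sup>+\<omega>. ennreal (Y2 n k t (\<lambda>i. X i \<omega>)) \<partial>M) = (\<integral>\<^sup>+\<omega>. ennreal (Y2 n k t (\<lambda>i\<in>{1..n}. X i \<omega>)) \<partial>M)"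
      using Y2_restrict[OF assms(6)] by simp
    also have "\<dots> = (\<integral>\<^sup>+x. ennreal (Y2 n k t x) \<partial>distr M (PiM {1..n} (\<lambda>_. borel)) (\<lambda>\<omega>. \<lambda>i\<in>{1..n}. X i \<omega>))"
      by (rule nn_integral_distr[symmetric, OF Xv]) (use Y2_meas[OF kk] in measurable)
    finally show ?thesis unfolding D .
  qed
  have probP: "prob_space P" unfolding P_def U_def
    by (rule prob_space_PiM) (use U_prob[OF assms(5)] in auto)
  have step2: "(\<integral>\<^sup>+x. ennreal (Y2 n k t x) \<partial>P) = (\<integral>\<^sup>+x. (\<integral>\<^sup>+s. indicator {0..<Y2 n k t x} s \<partial>lborel) \<partial>P)"
  proof (rule nn_integral_cong)
    fix x
    have e: "(\<integral>\<^sup>+s. indicator {0..<Y2 n k t x} s \<partial>lborel) = emeasure lborel {0..<Y2 n k t x}"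
      by (rule nn_integral_indicator) simp
    show "ennreal (Y2 n k t x) = (\<integral>\<^sup>+s. indicator {0..<Y2 n k t x} s \<partial>lborel)"
    proof (cases "0 \<le> Y2 n k t x")
      case True then show ?thesis unfolding e by simp
    next
      case False then show ?thesis unfolding e by (simp add: ennreal_neg)
    qed
  qed
  have pairsf: "pair_sigma_finite P lborel"
    by (rule pair_sigma_finite.intro[OF prob_space_imp_sigma_finite[OF probP] sigma_finite_lborel])
  have step3: "(\<integral>\<^sup>+x. (\<integral>\<^sup>+s. indicator {0..<Y2 n k t x} s \<partial>lborel) \<partial>P)
      = (\<integral>\<^sup>+s. (\<integral>\<^sup>+x. indicator {0..<Y2 n k t x} s \<partial>P) \<partial>lborel)"
    apply (rule pair_sigma_finite.Fubini'[OF pairsf, symmetric])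
    apply measurable
    apply (simp only: atLeastLessThan_iff)
    apply measurable
    done
  have step4: "(\<integral>\<^sup>+x. indicator {0..<Y2 n k t x} s \<partial>P) = ennreal (indicator {0..T} s * F (s/T))" for s
  proof (cases "0 \<le> s")
    case False
    then show ?thesis by simp
  next
    case True
    have "(\<integral>\<^sup>+x. indicator {0..<Y2 n k t x} s \<partial>P)
        = (\<integral>\<^sup>+x. ennreal (of_bool (s < x t \<and> card {i\<in>{1..n}-{t}. x i \<le> s} < k)) \<partial>P)"
    proof (rule nn_integral_cong)
      fix x
      show "indicator {0..<Y2 n k t x} s = ennreal (of_bool (s < x t \<and> card {i\<in>{1..n}-{t}. x i \<le> s} < k))"
        using Y2_gt_iff[OF kk, of s x] True by (simp add: indicator_def)
    qed
    also have "\<dots> = (if s \<le> T then ennreal (F (s/T)) else 0)"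
      unfolding P_def U_def F_def by (rule inner[OF assms(5) kk True])
    also have "\<dots> = ennreal (indicator {0..T} s * F (s/T))"
      using True by (simp add: indicator_def)
    finally show ?thesis .
  qed
  have Fm[measurable]: "F \<in> borel_measurable borel" unfolding F_def by measurable
  have Fnn: "0 \<le> F u" if "u \<in> {0..1}" for u
    unfolding F_def using that by (intro sum_nonneg mult_nonneg_nonneg) auto
  have intF: "(F has_integral V) {0..1}"
    unfolding F_def V_def by (rule poly_integral) (use assms(4) in simp)
  have step5: "(\<integral>\<^sup>+s. ennreal (indicator {0..T} s * F (s/T)) \<partial>lborel) = ennreal T * ennreal V"
  proof -
    have "(\<integral>\<^sup>+s. ennreal (indicator {0..T} s * F (s/T)) \<partial>lborel)
        = ennreal \<bar>T\<bar> * (\<integral>\<^sup>+u. ennreal (indicator {0..T} (0 + T*u) * F ((0 + T*u)/T)) \<partial>lborel)"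
      by (rule nn_integral_real_affine) (use assms(5) in \<open>measurable, auto\<close>)
    also have "(\<integral>\<^sup>+u. ennreal (indicator {0..T} (0 + T*u) * F ((0 + T*u)/T)) \<partial>lborel)
        = (\<integral>\<^sup>+u. ennreal (indicator {0..1} u * F u) \<partial>lborel)"
    proof (rule nn_integral_cong)
      fix u :: real
      have "T*u \<in> {0..T} \<longleftrightarrow> u \<in> {0..1}" using assms(5)
        by (auto simp: zero_le_mult_iff mult_le_cancel_left1)
      then show "ennreal (indicator {0..T} (0 + T*u) * F ((0 + T*u)/T)) = ennreal (indicator {0..1} u * F u)"
        using assms(5) by (simp add: indicator_def)
    qed
    also have "\<dots> = ennreal V"
      by (rule nn_integral_has_integral_lebesgue[OF _ intF]) (use Fnn in auto)
    finally show ?thesis using assms(5) by simp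
  qed
  have V0: "0 \<le> V" unfolding V_def by (intro sum_nonneg) auto
  have "(\<integral>\<omega>. Y2 n k t (\<lambda>i. X i \<omega>) \<partial>M) = T * V"
    unfolding step1 step2 step3 step4 step5 using V0 assms(5)
    by (simp add: ennreal_mult''[symmetric])
  also have "T * V = T / 2 - (real (n - k) * real (n - k + 1) * T) / (2 * real n * real (n + 1))"
  proof -
    have kn: "k \<le> n" using assms(4) by simp
    have "V = (\<Sum>j<k. real (n-j)) / (real n * real (n+1))" unfolding V_def by (simp add: sum_divide_distrib)
    also have "\<dots> = ((real n * real (n+1) - real (n-k) * real (n-k+1)) / 2) / (real n * real (n+1))"
      by (simp add: sum_n_minus[OF kn])
    finally have "V = ((real n * real (n+1) - real (n-k) * real (n-k+1)) / 2) / (real n * real (n+1))" .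
    moreover have "real n > 0" using assms(2) by simp
    ultimately show ?thesis using final_arith[of "real n" T "real (n-k)"] by (simp only: of_nat_add of_nat_1)
  qed
  finally show ?thesis .
qed

end
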